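(* Let $d\ge 1$, $\phi(\mathbf x,\theta)=\|\mathbf x-\theta\|$ for $\mathbf x,\theta\in\mathbb R^d$, and let $h\colon L^\infty(\mathbb R^d)\to\mathbb R$ be bounded (maps bounded sets to bounded sets) with $h(g\circ\psi)=h(g)$ for all $g\in L^\infty(\mathbb R^d)$ and every bijection $\psi\colon\mathbb R^d\to\mathbb R^d$. Let $\mu_0,\nu_0\in\mathcal P^+_{\phi,c}(\mathbb R^d)$ satisfy $\mathcal N_{h,\phi}[\mu_0]\neq\mathcal N_{h,\phi}[\nu_0]$ and consider $$\mathbb F=\{(s\mathbf Q\cdot+\mathbf y)_\#\mu_0 : s>0,\ \mathbf Q\in\mathrm O(d),\ \mathbf y\in\mathbb R^d\},\qquad \mathbb G=\{(s\mathbf Q\cdot+\mathbf y)_\#\nu_0 : s>0,\ \mathbf Q\in\mathrm O(d),\ \mathbf y\in\mathbb R^d\}.$$ Then $\mathbb F,\mathbb G\subset\mathcal P^+_{\phi,c}(\mathbb R^d)$, and $\mathcal N_{h,\phi}[\mathbb F]$ and $\mathcal N_{h,\phi}[\mathbb G]$ are linearly separable in $L^\infty_\rho(\mathbb R)$.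
   Context: Circular Radon transform: for $\theta\in\mathbb R^d$ and a finite Borel measure $\mu$ on $\mathbb R^d$, $\mathcal R_{\phi,\theta}[\mu]=(\phi(\cdot,\theta))_\#\mu$, a measure on $\mathbb R$. Fix a reference Borel probability measure $\rho$ on $\mathbb R$ without atoms. For a probability measure $\nu$ on $\mathbb R$ with $F_\nu(t)=\nu((-\infty,t])$, let $F_\nu^{[-1]}(t)=\inf\{s:F_\nu(s)>t\}$ and the CDT $\hat\nu=F_\nu^{[-1]}\circ F_\rho$; $\widehat{\mathcal R}_{\phi,\theta}[\mu]$ is the CDT of $\mathcal R_{\phi,\theta}[\mu]$. For $g\in L^2_\rho(\mathbb R)$, $\operatorname{mean}(g)=\int g\,\mathrm d\rho$, $\operatorname{std}(g)=(\int|g-\operatorname{mean}(g)|^2\mathrm d\rho)^{1/2}$; for a probability measure on $\mathbb R$, $\operatorname{std}$ denotes its standard deviation. $\mathcal P^+_{\phi,c}(\mathbb R^d)$ is the set of Borel probability measures $\mu$ on $\mathbb R^d$ with compact support for which there is $c>0$ with $\operatorname{std}(\mathcal R_{\phi,\theta}[\mu])\ge c$ for all $\theta\in\mathbb R^d$. For such $\mu$, $\mathcal N_\phi[\mu](t,\theta)=\big(\widehat{\mathcal R}_{\phi,\theta}[\mu](t)-\operatorname{mean}(\widehat{\mathcal R}_{\phi,\theta}[\mu])\big)/\operatorname{std}(\widehat{\mathcal R}_{\phi,\theta}[\mu])$ and $\mathcal N_{h,\phi}[\mu](t)=h(\mathcal N_\phi[\mu](t,\cdot))$, $t\in\mathbb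 R$. Subsets $A,B$ of a normed space $V$ are linearly separable if there exist a continuous linear functional $\ell$ on $V$ and $c\in\mathbb R$ with $\ell>c$ on $A$ and $\ell<c$ on $B$.
   Formalization: $\mathcal N_{h,\phi}[\mu_0]$ and $\mathcal N_{h,\phi}[\nu_0]$ are also assumed Borel measurable and $\rho$-essentially bounded, that is, to lie in $L^\infty_\rho(\mathbb R)$. The statement above fails without it. *)

theory Defs
  imports "HOL-Probability.Probability"
begin

definition circ_radon :: "'a::euclidean_space measure \<Rightarrow> 'a \<Rightarrow> real measure" where
  "circ_radon \<mu> \<theta> = distr \<mu> borel (\<lambda>x. norm (x - \<theta>))"

definition gen_inv :: "(real \<Rightarrow> real) \<Rightarrow> real \<Rightarrow> real" where
  "gen_inv F t = Inf {s. F s > t}"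

definition cdt :: "real measure \<Rightarrow> real measure \<Rightarrow> real \<Rightarrow> real" where
  "cdt \<rho> \<nu> = (\<lambda>t. gen_inv (cdf \<nu>) (cdf \<rho> t))"

definition fmean :: "real measure \<Rightarrow> (real \<Rightarrow> real) \<Rightarrow> real" where
  "fmean \<rho> g = (\<integral>t. g t \<partial>\<rho>)"

definition fstd :: "real measure \<Rightarrow> (real \<Rightarrow> real) \<Rightarrow> real" where
  "fstd \<rho> g = sqrt (\<integral>t. (g t - fmean \<rho> g)\<^sup>2 \<partial>\<rho>)"

definition mstd :: "real measure \<Rightarrow> real" where
  "mstd \<nu> = sqrt (\<integral>x. (x - (\<integral>y. y \<partial>\<nu>))\<^sup>2 \<partial>\<nu>)"

definition msupport :: "'a::metric_space measure \<Rightarrow> 'a set" where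
  "msupport \<mu> = {x. \<forall>e>0. emeasure \<mu> (ball x e) > 0}"

definition Pplus_circ :: "'a::euclidean_space measure set" where
  "Pplus_circ = {\<mu>. prob_space \<mu> \<and> sets \<mu> = sets borel \<and> compact (msupport \<mu>) \<and>
      (\<exists>c>0. \<forall>\<theta>. mstd (circ_radon \<mu> \<theta>) \<ge> c)}"

definition Nphi :: "real measure \<Rightarrow> 'a::euclidean_space measure \<Rightarrow> real \<Rightarrow> 'a \<Rightarrow> real" where
  "Nphi \<rho> \<mu> t \<theta> =
     (cdt \<rho> (circ_radon \<mu> \<theta>) t - fmean \<rho> (cdt \<rho> (circ_radon \<mu> \<theta>)))
       / fstd \<rho> (cdt \<rho> (circ_radon \<mu> \<theta>))"

definition Nh :: "real measure \<Rightarrow> (('a::euclidean_space \<Rightarrow> real) \<Rightarrow> real) \<Rightarrow> 'a measure \<Rightarrow> real \<Rightarrow> real" where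
  "Nh \<rho> h \<mu> t = h (\<lambda>\<theta>. Nphi \<rho> \<mu> t \<theta>)"

definition Linf :: "real measure \<Rightarrow> (real \<Rightarrow> real) set" where
  "Linf \<rho> = {f. f \<in> borel_measurable \<rho> \<and> (\<exists>B. AE x in \<rho>. \<bar>f x\<bar> \<le> B)}"

text \<open>Continuous linear functional on L^infinity_rho, given on representatives
  (well defined on a.e.-classes, bounded w.r.t. the essential sup norm).\<close>
definition cont_lin_functional :: "real measure \<Rightarrow> ((real \<Rightarrow> real) \<Rightarrow> real) \<Rightarrow> bool" where
  "cont_lin_functional \<rho> L \<longleftrightarrow>
     (\<forall>f\<in>Linf \<rho>. \<forall>g\<in>Linf \<rho>. L (\<lambda>x. f x + g x) = L f + L g) \<and>
     (\<forall>a. \<forall>f\<in>Linf \<rho>. L (\<lambda>x. a * f x) = a * L f) \<and>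
     (\<forall>f\<in>Linf \<rho>. \<forall>g\<in>Linf \<rho>. (AE x in \<rho>. f x = g x) \<longrightarrow> L f = L g) \<and>
     (\<exists>C. \<forall>f\<in>Linf \<rho>. \<forall>B. (AE x in \<rho>. \<bar>f x\<bar> \<le> B) \<longrightarrow> \<bar>L f\<bar> \<le> C * B)"

definition lin_separable_Linf :: "real measure \<Rightarrow> (real \<Rightarrow> real) set \<Rightarrow> (real \<Rightarrow> real) set \<Rightarrow> bool" where
  "lin_separable_Linf \<rho> A B \<longleftrightarrow> A \<subseteq> Linf \<rho> \<and> B \<subseteq> Linf \<rho> \<and>
     (\<exists>L c. cont_lin_functional \<rho> L \<and> (\<forall>f\<in>A. L f > c) \<and> (\<forall>f\<in>B. L f < c))"

definition sim_orbit :: "'a::euclidean_space measure \<Rightarrow> 'a measure set" where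
  "sim_orbit \<mu> = {distr \<mu> borel (\<lambda>x. s *\<^sub>R Q x + y) | s Q y.
      s > 0 \<and> orthogonal_transformation Q}"

end

theory Submission
  imports Defs
begin
lemma Linf_integrable:
  assumes "prob_space \<rho>" "f \<in> Linf \<rho>" "g \<in> Linf \<rho>"
  shows "integrable \<rho> (\<lambda>x. f x * g x)"
proof -
  interpret prob_space \<rho> by fact
  obtain A where A: "AE x in \<rho>. \<bar>f x\<bar> \<le> A" using assms(2) by (auto simp: Linf_def)
  obtain B where B: "AE x in \<rho>. \<bar>g x\<bar> \<le> B" using assms(3) by (auto simp: Linf_def)
  have "AE x in \<rho>. norm (f x * g x) \<le> A * B"
    using A B by eventually_elim (simp add: abs_mult mult_mono')
  then show ?thesis
    using assms by (intro integrable_const_bound[where B="A*B"]) (auto simp: Linf_def)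
qed

lemma separation:
  assumes rho: "prob_space \<rho>"
    and f: "f \<in> Linf \<rho>" and g: "g \<in> Linf \<rho>"
    and ne: "\<not> (AE t in \<rho>. f t = g t)"
    and A: "A \<subseteq> Linf \<rho>" "\<And>a. a \<in> A \<Longrightarrow> AE t in \<rho>. a t = f t"
    and B: "B \<subseteq> Linf \<rho>" "\<And>b. b \<in> B \<Longrightarrow> AE t in \<rho>. b t = g t"
  shows "lin_separable_Linf \<rho> A B"
proof -
  interpret prob_space \<rho> by fact
  define w where "w = (\<lambda>x. f x - g x)"
  have fm: "f \<in> borel_measurable \<rho>" and gm: "g \<in> borel_measurable \<rho>" using f g by (auto simp: Linf_def)
  obtain Bf where Bf: "AE x in \<rho>. \<bar>f x\<bar> \<le> Bf" using f by (auto simp: Linf_def)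
  obtain Bg where Bg: "AE x in \<rho>. \<bar>g x\<bar> \<le> Bg" using g by (auto simp: Linf_def)
  have w: "w \<in> Linf \<rho>"
  proof -
    have "AE x in \<rho>. \<bar>w x\<bar> \<le> Bf + Bg" using Bf Bg by eventually_elim (auto simp: w_def)
    then show ?thesis using fm gm by (auto simp: Linf_def w_def)
  qed
  define L where "L = (\<lambda>u. \<integral>x. u x * w x \<partial>\<rho>)"
  have int: "\<And>u. u \<in> Linf \<rho> \<Longrightarrow> integrable \<rho> (\<lambda>x. u x * w x)"
    using Linf_integrable[OF rho _ w] by blast
  have cl: "cont_lin_functional \<rho> L"
    unfolding cont_lin_functional_def
  proof (intro conjI ballI allI impI)
    fix u v assume "u \<in> Linf \<rho>" "v \<in> Linf \<rho>"
    then show "L (\<lambda>x. u x + v x) = L u + L v"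
      unfolding L_def using int by (simp add: distrib_right)
  next
    fix a u show "L (\<lambda>x. a * u x) = a * L u" unfolding L_def by (simp add: mult.assoc)
  next
    fix u v assume uv: "u \<in> Linf \<rho>" "v \<in> Linf \<rho>" "AE x in \<rho>. u x = v x"
    then show "L u = L v" unfolding L_def
      by (intro integral_cong_AE) (use fm gm in \<open>auto simp: Linf_def w_def\<close>)
  next
    obtain Bw where Bw: "AE x in \<rho>. \<bar>w x\<bar> \<le> Bw" using w by (auto simp: Linf_def)
    show "\<exists>C. \<forall>f\<in>Linf \<rho>. \<forall>B. (AE x in \<rho>. \<bar>f x\<bar> \<le> B) \<longrightarrow> \<bar>L f\<bar> \<le> C * B"
    proof (intro exI[of _ Bw] ballI allI impI)
      fix u B assume u: "u \<in> Linf \<rho>" "AE x in \<rho>. \<bar>u x\<bar> \<le> B"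
      have ae: "AE x in \<rho>. norm (u x * w x) \<le> B * Bw"
        using u(2) Bw by eventually_elim (simp add: abs_mult mult_mono')
      have "\<bar>L u\<bar> \<le> (\<integral>x. norm (u x * w x) \<partial>\<rho>)" unfolding L_def
        using integral_norm_bound[of \<rho> "\<lambda>x. u x * w x"] by simp
      also have "\<dots> \<le> (\<integral>x. B * Bw \<partial>\<rho>)"
        by (rule integral_mono_AE) (use ae int[OF u(1)] in auto)
      also have "\<dots> = B * Bw" by (simp add: prob_space)
      finally have "\<bar>L u\<bar> \<le> B * Bw" .
      then show "\<bar>L u\<bar> \<le> Bw * B" by (simp add: mult.commute)
    qed
  qed
  have Lf: "L a = L f" if "a \<in> A" for a
    using cl A that f unfolding cont_lin_functional_def by blast
  have Lg: "L b = L g" if "b \<in> B" for b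
    using cl B that g unfolding cont_lin_functional_def by blast
  have diff: "L f - L g = (\<integral>x. (w x)\<^sup>2 \<partial>\<rho>)"
    unfolding L_def using int[OF f] int[OF g]
    by (simp add: w_def power2_eq_square left_diff_distrib[symmetric] del: Bochner_Integration.integral_diff)
      (subst Bochner_Integration.integral_diff[symmetric]; simp add: left_diff_distrib)
  have pos: "(\<integral>x. (w x)\<^sup>2 \<partial>\<rho>) > 0"
  proof (rule ccontr)
    assume "\<not> ?thesis"
    moreover have "(\<integral>x. (w x)\<^sup>2 \<partial>\<rho>) \<ge> 0" by simp
    ultimately have "(\<integral>x. (w x)\<^sup>2 \<partial>\<rho>) = 0" by simp
    moreover have "integrable \<rho> (\<lambda>x. (w x)\<^sup>2)" using int[OF w] by (simp add: power2_eq_square)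
    ultimately have "AE x in \<rho>. (w x)\<^sup>2 = 0"
      using integral_nonneg_eq_0_iff_AE by (metis zero_le_power2 AE_I2)
    then have "AE x in \<rho>. f x = g x" by eventually_elim (simp add: w_def)
    then show False using ne by simp
  qed
  show ?thesis unfolding lin_separable_Linf_def
    using A B cl Lf Lg diff pos
    by (intro conjI exI[of _ L] exI[of _ "(L f + L g)/2"]) auto
qed

lemma cdf_cont_eps:
  fixes F :: "real \<Rightarrow> real"
  assumes "isCont F u" "F u < y"
  shows "\<exists>d>0. \<forall>x. \<bar>x - u\<bar> < d \<longrightarrow> F x < y"
proof -
  have "\<forall>\<^sub>F x in at u. F x < y"
    using order_tendstoD(2)[OF assms(1)[unfolded isCont_def] assms(2)] .
  then obtain d where d: "d > 0" "\<And>x. x \<noteq> u \<Longrightarrow> dist x u < d \<Longrightarrow> F x < y"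
    unfolding eventually_at by blast
  then show ?thesis using assms(2) by (metis dist_real_def)
qed

lemma cdf_cont_eps':
  fixes F :: "real \<Rightarrow> real"
  assumes "isCont F u" "F u > y"
  shows "\<exists>d>0. \<forall>x. \<bar>x - u\<bar> < d \<longrightarrow> F x > y"
proof -
  have "\<forall>\<^sub>F x in at u. F x > y"
    using order_tendstoD(1)[OF assms(1)[unfolded isCont_def] assms(2)] .
  then obtain d where d: "d > 0" "\<And>x. x \<noteq> u \<Longrightarrow> dist x u < d \<Longrightarrow> F x > y"
    unfolding eventually_at by blast
  then show ?thesis using assms(2) by (metis dist_real_def)
qed

context real_distribution
begin

lemma cdf_mono': "mono (cdf M)"
  by (simp add: cdf_nondecreasing monoI)

lemma uniform_le:
  assumes atomless: "\<And>x. measure M {x} = 0" and y: "0 \<le> y" "y \<le> 1"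
  shows "measure M {t. cdf M t \<le> y} = y"
proof (cases "y = 1")
  case True
  then show ?thesis using cdf_bounded_prob prob_space by simp
next
  case False
  with y have y1: "y < 1" by simp
  let ?F = "cdf M"
  have cont: "\<And>u. isCont ?F u" using atomless isCont_cdf by simp
  define D where "D = {t. ?F t \<le> y}"
  have "\<forall>\<^sub>F t in at_top. ?F t > y" using cdf_lim_at_top_prob y1 by (simp add: order_tendstoD(1))
  then obtain T where T: "\<And>t. t \<ge> T \<Longrightarrow> ?F t > y" by (auto simp: eventually_at_top_linorder)
  have bdd: "bdd_above D" unfolding D_def bdd_above_def
    by (metis (mono_tags) T mem_Collect_eq not_le order.strict_implies_order)
  show ?thesis
  proof (cases "D = {}")
    case True
    have "y = 0"
    proof (rule ccontr)
      assume "y \<noteq> 0" with y have "y > 0" by simp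
      then have "\<forall>\<^sub>F t in at_bot. ?F t < y" using cdf_lim_at_bot by (simp add: order_tendstoD(2))
      then obtain t where "?F t < y" by (auto simp: eventually_at_bot_linorder)
      then show False using True by (auto simp: D_def dest: less_imp_le)
    qed
    then show ?thesis using True by (simp add: D_def)
  next
    case False
    have clo: "closed D" unfolding D_def
      using closed_Collect_le[of ?F "\<lambda>_. y"] cont
      by (simp add: continuous_at_imp_continuous_on)
    define u where "u = Sup D"
    have uD: "u \<in> D" unfolding u_def using closed_contains_Sup[OF False bdd clo] .
    have Deq: "D = {..u}"
    proof safe
      fix t assume "t \<in> D" then show "t \<le> u" unfolding u_def using bdd by (rule cSup_upper)
    next
      fix t assume "t \<le> u"
      then have "?F t \<le> ?F u" by (rule cdf_nondecreasing)
      then show "t \<in> D" using uD by (auto simp: D_def)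
    qed
    have "?F u \<ge> y"
    proof (rule ccontr)
      assume "\<not> ?F u \<ge> y"
      then obtain d where d: "d > 0" "\<And>x. \<bar>x - u\<bar> < d \<Longrightarrow> ?F x < y"
        using cdf_cont_eps[OF cont] by (meson not_le)
      then have "u + d/2 \<in> D" by (auto simp: D_def intro!: less_imp_le)
      then show False using Deq d by auto
    qed
    moreover have "?F u \<le> y" using uD by (simp add: D_def)
    ultimately show ?thesis using Deq by (simp add: D_def cdf_def)
  qed
qed

lemma uniform_less:
  assumes atomless: "\<And>x. measure M {x} = 0" and y: "0 \<le> y" "y \<le> 1"
  shows "measure M {t. cdf M t < y} = y"
proof -
  let ?F = "cdf M"
  have cont: "\<And>u. isCont ?F u" using atomless isCont_cdf by simp
  define D where "D = {t. ?F t < y}"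
  show ?thesis
  proof (cases "y = 0")
    case True
    have "{t. cdf M t < y} = {}" by (simp add: True not_less cdf_nonneg)
    then show ?thesis using True by simp
  next
    case False
    with y have y0: "y > 0" by simp
    show ?thesis
    proof (cases "D = UNIV")
      case True
      have "y = 1"
      proof (rule ccontr)
        assume "y \<noteq> 1" with y have "y < 1" by simp
        then have "\<forall>\<^sub>F t in at_top. ?F t > y" using cdf_lim_at_top_prob by (simp add: order_tendstoD(1))
        then obtain t where "?F t > y" by (auto simp: eventually_at_top_linorder)
        then show False using True unfolding D_def by (metis (mono_tags) UNIV_I mem_Collect_eq order.asym)
      qed
      then show ?thesis using True using prob_space by (simp add: D_def)
    next
      case False
      then obtain t0 where t0: "?F t0 \<ge> y" unfolding D_def by (metis (mono_tags) UNIV_eq_I mem_Collect_eq not_le)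
      have bdd: "bdd_above D" unfolding D_def bdd_above_def
        by (metis (mono_tags, lifting) cdf_nondecreasing le_less_trans less_le_not_le mem_Collect_eq nle_le t0)
      have "\<forall>\<^sub>F t in at_bot. ?F t < y" using cdf_lim_at_bot y0 by (simp add: order_tendstoD(2))
      then obtain t1 where "?F t1 < y" by (auto simp: eventually_at_bot_linorder)
      then have ne: "D \<noteq> {}" by (auto simp: D_def)
      define u where "u = Sup D"
      have below: "t \<in> D" if tu: "t < u" for t
      proof -
        obtain d where "d \<in> D" "t < d" using less_cSupD[OF ne] tu u_def by blast
        then show ?thesis using cdf_nondecreasing[of t d] by (auto simp: D_def)
      qed
      have uD: "u \<notin> D"
      proof
        assume "u \<in> D"
        then obtain d where d: "d > 0" "\<And>x. \<bar>x - u\<bar> < d \<Longrightarrow> ?F x < y"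
          using cdf_cont_eps[OF cont] unfolding D_def by (metis mem_Collect_eq)
        then have "u + d/2 \<in> D" by (auto simp: D_def)
        then have "u + d/2 \<le> u" unfolding u_def using bdd by (rule cSup_upper)
        then show False using d by simp
      qed
      have Deq: "D = {..<u}"
      proof safe
        fix t assume "t \<in> D"
        then have "t \<le> u" unfolding u_def using bdd by (rule cSup_upper)
        then show "t < u" using uD \<open>t \<in> D\<close> by (cases "t = u") auto
      next
        fix t assume "t < u" then show "t \<in> D" by (rule below)
      qed
      have Fu1: "?F u \<ge> y" using uD by (simp add: D_def)
      have Fu2: "?F u \<le> y"
      proof (rule ccontr)
        assume "\<not> ?F u \<le> y"
        then obtain d where d: "d > 0" "\<And>x. \<bar>x - u\<bar> < d \<Longrightarrow> ?F x > y"
          using cdf_cont_eps'[OF cont] by (meson not_le)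
        then have "u - d/2 \<in> D" by (intro below) auto
        then show False using d(2)[of "u - d/2"] d(1) by (auto simp: D_def)
      qed
      have "{..<u} = {..u} - {u}" by auto
      then have "measure M {..<u} = measure M {..u} - measure M {u}"
        by (simp add: finite_measure_Diff)
      then show ?thesis using Deq Fu1 Fu2 atomless by (simp add: D_def cdf_def)
    qed
  qed
qed

end

lemma cdf_below:
  assumes N: "real_distribution N" and ab: "AE x in N. a \<le> x \<and> x \<le> b" and s: "s < a"
  shows "cdf N s = 0"
proof -
  interpret real_distribution N by fact
  have "measure N {..s} = measure N {}"
    by (rule measure_eq_AE) (use ab s in auto)
  then show ?thesis by (simp add: cdf_def)
qed

lemma cdf_above:
  assumes N: "real_distribution N" and ab: "AE x in N. a \<le> x \<and> x \<le> b" and s: "b \<le> s"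
  shows "cdf N s = 1"
proof -
  interpret real_distribution N by fact
  have "measure N {..s} = measure N UNIV"
    by (rule measure_eq_AE) (use ab s in auto)
  then show ?thesis using prob_space by (simp add: cdf_def)
qed

lemma gen_inv_props:
  assumes N: "real_distribution N" and ab: "AE x in N. a \<le> x \<and> x \<le> b"
    and x: "0 \<le> x" "x < 1"
  shows "a \<le> gen_inv (cdf N) x" "gen_inv (cdf N) x \<le> b"
    "\<And>s. cdf N s > x \<Longrightarrow> gen_inv (cdf N) x \<le> s"
    "\<And>s. gen_inv (cdf N) x \<le> s \<Longrightarrow> x \<le> cdf N s"
proof -
  interpret real_distribution N by fact
  define S where "S = {s. cdf N s > x}"
  have bS: "b \<in> S" using cdf_above[OF N ab, of b] x by (simp add: S_def)
  have aS: "a \<le> s" if "s \<in> S" for s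
    using cdf_below[OF N ab, of s] that x by (force simp: S_def)
  have bdd: "bdd_below S" using aS by (auto simp: bdd_below_def)
  have ne: "S \<noteq> {}" using bS by auto
  have gi: "gen_inv (cdf N) x = Inf S" by (simp add: gen_inv_def S_def)
  show "a \<le> gen_inv (cdf N) x" unfolding gi using ne aS by (rule cInf_greatest)
  show "gen_inv (cdf N) x \<le> b" unfolding gi using bS bdd by (rule cInf_lower)
  show "gen_inv (cdf N) x \<le> s" if "cdf N s > x" for s
    unfolding gi using bdd that by (intro cInf_lower) (auto simp: S_def)
  show "x \<le> cdf N s" if le: "gen_inv (cdf N) x \<le> s" for s
  proof (rule ccontr)
    assume "\<not> x \<le> cdf N s"
    then have lt: "cdf N s < x" by simp
    have "\<forall>\<^sub>F z in at_right s. cdf N z < x"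
      using order_tendstoD(2)[OF cdf_is_right_cont[of s, unfolded continuous_within] lt] .
    then obtain b' where b': "b' > s" "\<And>z. s < z \<Longrightarrow> z < b' \<Longrightarrow> cdf N z < x"
      unfolding eventually_at_right_field by blast
    define d where "d = b' - s"
    have d: "d > 0" "\<And>z. s < z \<Longrightarrow> z < s + d \<Longrightarrow> cdf N z < x"
      using b' by (auto simp: d_def)
    have "s + d \<le> z" if "z \<in> S" for z
    proof (rule ccontr)
      assume "\<not> s + d \<le> z"
      then have "z < s + d" by simp
      moreover have "cdf N z > x" using that by (simp add: S_def)
      ultimately show False
      proof (cases "s < z")
        case True then show False using d \<open>z < s + d\<close> \<open>cdf N z > x\<close> by fastforce
      next
        case False then show False using lt cdf_nondecreasing[of z s] \<open>cdf N z > x\<close> by simp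
      qed
    qed
    then have "s + d \<le> Inf S" using ne by (intro cInf_greatest) auto
    then show False using le d gi by simp
  qed
qed

lemma gen_inv_mono:
  assumes N: "real_distribution N" and ab: "AE x in N. a \<le> x \<and> x \<le> b"
    and x: "0 \<le> x" "x \<le> x'" "x' < 1"
  shows "gen_inv (cdf N) x \<le> gen_inv (cdf N) x'"
proof -
  interpret real_distribution N by fact
  have bS: "cdf N b > x'" using cdf_above[OF N ab, of b] x by simp
  have aS: "a \<le> s" if "cdf N s > x" for s
    using cdf_below[OF N ab, of s] that x by force
  show ?thesis unfolding gen_inv_def
    by (rule cInf_superset_mono) (use bS aS x in \<open>force simp: bdd_below_def\<close>)+
qed

lemma cdf_meas: "cdf M \<in> borel_measurable borel" if "real_distribution M"
proof -
  interpret real_distribution M by fact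
  show ?thesis by (rule borel_measurable_mono) (simp add: cdf_mono')
qed

lemma AE_cdf_less1:
  assumes rho: "real_distribution \<rho>" and atomless: "\<And>x. measure \<rho> {x} = 0"
  shows "AE t in \<rho>. cdf \<rho> t < 1"
proof -
  interpret real_distribution \<rho> by fact
  have m: "{t. cdf \<rho> t < 1} \<in> sets \<rho>"
    using measurable_sets_borel[OF cdf_meas[OF rho], of "{..<1}"] by (simp add: vimage_def)
  have "prob {t. cdf \<rho> t < 1} = 1" using uniform_less[OF atomless] by simp
  then have "AE t in \<rho>. t \<in> {t. cdf \<rho> t < 1}" using prob_eq_1[OF m] by simp
  then show ?thesis by simp
qed

lemma cdt_range:
  assumes rho: "real_distribution \<rho>" and N: "real_distribution N"
    and ab: "AE x in N. a \<le> x \<and> x \<le> b" and t: "cdf \<rho> t < 1"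
  shows "a \<le> cdt \<rho> N t \<and> cdt \<rho> N t \<le> b"
proof -
  interpret real_distribution \<rho> by fact
  show ?thesis using gen_inv_props(1,2)[OF N ab _ t] cdf_nonneg by (simp add: cdt_def)
qed

lemma cdt_meas:
  assumes rho: "real_distribution \<rho>" and N: "real_distribution N"
    and ab: "AE x in N. a \<le> x \<and> x \<le> b"
  shows "cdt \<rho> N \<in> borel_measurable borel"
proof -
  interpret R: real_distribution \<rho> by fact
  define G1 where "G1 = (\<lambda>t. if cdf \<rho> t < 1 then gen_inv (cdf N) (cdf \<rho> t) else b)"
  have "mono G1"
  proof (rule monoI)
    fix t t' :: real assume tt: "t \<le> t'"
    have Ft: "cdf \<rho> t \<le> cdf \<rho> t'" using tt by (rule R.cdf_nondecreasing)
    show "G1 t \<le> G1 t'"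
    proof (cases "cdf \<rho> t' < 1")
      case True
      then show ?thesis using Ft gen_inv_mono[OF N ab R.cdf_nonneg Ft] by (simp add: G1_def)
    next
      case False
      then show ?thesis using gen_inv_props(2)[OF N ab R.cdf_nonneg] by (simp add: G1_def)
    qed
  qed
  then have G1m: "G1 \<in> borel_measurable borel" by (rule borel_measurable_mono)
  have eq: "cdt \<rho> N = (\<lambda>t. if cdf \<rho> t < 1 then G1 t else gen_inv (cdf N) 1)"
  proof
    fix t
    have "cdf \<rho> t \<le> 1" by (rule R.cdf_bounded_prob)
    then show "cdt \<rho> N t = (if cdf \<rho> t < 1 then G1 t else gen_inv (cdf N) 1)"
      by (auto simp: cdt_def G1_def)
  qed
  have Fm: "cdf \<rho> \<in> borel_measurable borel" by (rule cdf_meas[OF rho])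
  show ?thesis unfolding eq using G1m Fm by measurable
qed

lemma cdt_distr:
  assumes rho: "real_distribution \<rho>" and atomless: "\<And>x. measure \<rho> {x} = 0"
    and N: "real_distribution N" and ab: "AE x in N. a \<le> x \<and> x \<le> b"
  shows "distr \<rho> borel (cdt \<rho> N) = N"
proof -
  interpret R: real_distribution \<rho> by fact
  interpret NN: real_distribution N by fact
  let ?G = "cdt \<rho> N"
  have Gm: "?G \<in> borel_measurable borel" by (rule cdt_meas[OF rho N ab])
  have Gm': "?G \<in> borel_measurable \<rho>" using Gm by simp
  have Fm: "cdf \<rho> \<in> borel_measurable borel" by (rule cdf_meas[OF rho])
  have D: "real_distribution (distr \<rho> borel ?G)" using Gm' by simp
  have "cdf (distr \<rho> borel ?G) s = cdf N s" for s
  proof -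
    let ?y = "cdf N s"
    have y: "0 \<le> ?y" "?y \<le> 1" by (simp_all add: NN.cdf_nonneg NN.cdf_bounded_prob)
    have setG: "{t. ?G t \<le> s} \<in> sets \<rho>"
      using measurable_sets_borel[OF Gm, of "{..s}"] by (simp add: vimage_def)
    have set1: "{t. cdf \<rho> t < ?y} \<in> sets \<rho>"
      using measurable_sets_borel[OF Fm, of "{..<?y}"] by (simp add: vimage_def)
    have set2: "{t. cdf \<rho> t \<le> ?y} \<in> sets \<rho>"
      using measurable_sets_borel[OF Fm, of "{..?y}"] by (simp add: vimage_def)
    have setZ: "{t. \<not> cdf \<rho> t < 1} \<in> sets \<rho>"
      using measurable_sets_borel[OF Fm, of "{1..}"] by (simp add: vimage_def not_less)
    have Z0: "measure \<rho> {t. \<not> cdf \<rho> t < 1} = 0"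
    proof -
      have s1: "{t. cdf \<rho> t < 1} \<in> sets \<rho>"
        using measurable_sets_borel[OF Fm, of "{..<1}"] by (simp add: vimage_def)
      have "{t. \<not> cdf \<rho> t < 1} = space \<rho> - {t. cdf \<rho> t < 1}" by auto
      then have "measure \<rho> {t. \<not> cdf \<rho> t < 1} = 1 - measure \<rho> {t. cdf \<rho> t < 1}"
        using R.prob_compl[OF s1] by simp
      then show ?thesis using R.uniform_less[OF atomless, of 1] by simp
    qed
    have sub1: "{t. cdf \<rho> t < ?y} \<subseteq> {t. ?G t \<le> s}"
    proof safe
      fix t assume t: "cdf \<rho> t < ?y"
      then have "cdf \<rho> t < 1" using y by simp
      then show "?G t \<le> s" using gen_inv_props(3)[OF N ab R.cdf_nonneg _ t] by (simp add: cdt_def)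
    qed
    have sub2: "{t. ?G t \<le> s} \<subseteq> {t. cdf \<rho> t \<le> ?y} \<union> {t. \<not> cdf \<rho> t < 1}"
    proof (rule subsetI)
      fix t assume "t \<in> {t. ?G t \<le> s}"
      then show "t \<in> {t. cdf \<rho> t \<le> ?y} \<union> {t. \<not> cdf \<rho> t < 1}"
        using gen_inv_props(4)[OF N ab R.cdf_nonneg] by (auto simp: cdt_def)
    qed
    have "?y \<le> measure \<rho> {t. ?G t \<le> s}"
      using R.finite_measure_mono[OF sub1 setG] R.uniform_less[OF atomless y] by simp
    moreover have "measure \<rho> {t. ?G t \<le> s} \<le> ?y"
    proof -
      have "measure \<rho> {t. ?G t \<le> s} \<le> measure \<rho> ({t. cdf \<rho> t \<le> ?y} \<union> {t. \<not> cdf \<rho> t < 1})"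
        using R.finite_measure_mono[OF sub2] set2 setZ by blast
      also have "\<dots> \<le> measure \<rho> {t. cdf \<rho> t \<le> ?y} + measure \<rho> {t. \<not> cdf \<rho> t < 1}"
        using measure_subadditive[OF set2 setZ] R.emeasure_finite by simp
      finally show ?thesis using Z0 R.uniform_le[OF atomless y] by simp
    qed
    ultimately have "measure \<rho> {t. ?G t \<le> s} = ?y" by simp
    moreover have "cdf (distr \<rho> borel ?G) s = measure \<rho> {t. ?G t \<le> s}"
      unfolding cdf_def using Gm' by (subst measure_distr) (auto simp: vimage_def)
    ultimately show ?thesis by simp
  qed
  then show ?thesis using cdf_unique[OF D N] by blast
qed

lemma cdt_moments:
  assumes rho: "real_distribution \<rho>" and atomless: "\<And>x. measure \<rho> {x} = 0"
    and N: "real_distribution N" and ab: "AE x in N. a \<le> x \<and> x \<le> b"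
  shows "fmean \<rho> (cdt \<rho> N) = (\<integral>x. x \<partial>N)" "fstd \<rho> (cdt \<rho> N) = mstd N"
proof -
  interpret R: real_distribution \<rho> by fact
  have Gm': "cdt \<rho> N \<in> borel_measurable \<rho>" using cdt_meas[OF rho N ab] by simp
  have d: "distr \<rho> borel (cdt \<rho> N) = N" by (rule cdt_distr[OF rho atomless N ab])
  have m: "(\<integral>x. x \<partial>N) = (\<integral>t. cdt \<rho> N t \<partial>\<rho>)"
    using integral_distr[OF Gm', of "\<lambda>x. x"] d by simp
  then show "fmean \<rho> (cdt \<rho> N) = (\<integral>x. x \<partial>N)" by (simp add: fmean_def)
  have "(\<integral>x. (x - (\<integral>y. y \<partial>N))\<^sup>2 \<partial>N) = (\<integral>t. (cdt \<rho> N t - (\<integral>y. y \<partial>N))\<^sup>2 \<partial>\<rho>)"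
    using integral_distr[OF Gm', of "\<lambda>x. (x - (\<integral>y. y \<partial>N))\<^sup>2"] d by simp
  then show "fstd \<rho> (cdt \<rho> N) = mstd N" by (simp add: fstd_def mstd_def fmean_def m)
qed

lemma mean_bounds:
  assumes N: "real_distribution N" and ab: "AE x in N. a \<le> x \<and> x \<le> b"
  shows "a \<le> (\<integral>x. x \<partial>N) \<and> (\<integral>x. x \<partial>N) \<le> b"
proof -
  interpret real_distribution N by fact
  have "AE x in N. norm x \<le> \<bar>a\<bar> + \<bar>b\<bar>" using ab by eventually_elim auto
  then have int: "integrable N (\<lambda>x. x)"
    by (intro integrable_const_bound[where B="\<bar>a\<bar> + \<bar>b\<bar>"]) auto
  have "(\<integral>x. a \<partial>N) \<le> (\<integral>x. x \<partial>N)"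
    by (rule integral_mono_AE) (use int ab in \<open>auto elim!: eventually_mono\<close>)
  moreover have "(\<integral>x. x \<partial>N) \<le> (\<integral>x. b \<partial>N)"
    by (rule integral_mono_AE) (use int ab in \<open>auto elim!: eventually_mono\<close>)
  ultimately show ?thesis using prob_space by simp
qed

lemma support_AE:
  fixes \<mu> :: "'a::euclidean_space measure"
  assumes sets: "sets \<mu> = sets borel"
  shows "AE x in \<mu>. x \<in> msupport \<mu>"
proof -
  define F where "F = {ball z e | z e. e > 0 \<and> emeasure \<mu> (ball z e) = 0}"
  have op: "\<And>S. S \<in> F \<Longrightarrow> open S" by (auto simp: F_def)
  obtain F' where F': "F' \<subseteq> F" "countable F'" "\<Union>F' = \<Union>F" using Lindelof[OF op] by blast
  have null: "\<Union>F' \<in> null_sets \<mu>"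
  proof -
    have "(\<Union>S\<in>F'. S) \<in> null_sets \<mu>"
    proof (rule null_sets_UN'[OF F'(2)])
      fix S assume "S \<in> F'"
      then have "S \<in> F" using F' by auto
      then obtain z e where "S = ball z e" "emeasure \<mu> (ball z e) = 0" by (auto simp: F_def)
      moreover have "ball z e \<in> sets \<mu>" using sets by simp
      ultimately show "S \<in> null_sets \<mu>" by (simp add: null_sets_def)
    qed
    then show ?thesis by simp
  qed
  show ?thesis
  proof (rule AE_I'[OF null])
    show "{x \<in> space \<mu>. x \<notin> msupport \<mu>} \<subseteq> \<Union>F'"
    proof
      fix x assume "x \<in> {x \<in> space \<mu>. x \<notin> msupport \<mu>}"
      then obtain e where "e > 0" "\<not> emeasure \<mu> (ball x e) > 0" by (auto simp: msupport_def)
      then have "ball x e \<in> F" by (auto simp: F_def)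
      moreover have "x \<in> ball x e" using \<open>e > 0\<close> by simp
      ultimately show "x \<in> \<Union>F'" using F'(3) by blast
    qed
  qed
qed

lemma circ_radon_dist:
  fixes \<mu> :: "'a::euclidean_space measure"
  assumes "prob_space \<mu>" "sets \<mu> = sets borel"
  shows "real_distribution (circ_radon \<mu> \<theta>)"
proof -
  have m: "(\<lambda>x. norm (x - \<theta>)) \<in> borel_measurable \<mu>"
    by (subst measurable_cong_sets[OF assms(2) refl]) simp
  show ?thesis unfolding circ_radon_def real_distribution_def real_distribution_axioms_def
    using prob_space.prob_space_distr[OF assms(1) m] by simp
qed

lemma circ_radon_conc:
  fixes \<mu> :: "'a::euclidean_space measure"
  assumes "sets \<mu> = sets borel" "msupport \<mu> \<subseteq> cball 0 R"
  shows "AE r in circ_radon \<mu> \<theta>. norm \<theta> - R \<le> r \<and> r \<le> norm \<theta> + R"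
proof -
  have m: "(\<lambda>x. norm (x - \<theta>)) \<in> measurable \<mu> borel"
    by (subst measurable_cong_sets[OF assms(1) refl]) simp
  have "AE x in \<mu>. norm \<theta> - R \<le> norm (x - \<theta>) \<and> norm (x - \<theta>) \<le> norm \<theta> + R"
    using support_AE[OF assms(1)]
  proof eventually_elim
    case (elim x)
    then have "norm x \<le> R" using assms(2) by auto
    then show ?case using norm_triangle_ineq2[of \<theta> x] norm_triangle_ineq4[of x \<theta>]
      by (auto simp: norm_minus_commute)
  qed
  then show ?thesis unfolding circ_radon_def by (subst AE_distr_iff[OF m]) auto
qed

lemma Pplus_facts:
  fixes \<mu> :: "'a::euclidean_space measure"
  assumes "\<mu> \<in> Pplus_circ"
  obtains R c where "prob_space \<mu>" "sets \<mu> = sets borel" "c > 0" "msupport \<mu> \<subseteq> cball 0 R"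
    "\<And>\<theta>. mstd (circ_radon \<mu> \<theta>) \<ge> c"
proof -
  from assms obtain c where *: "prob_space \<mu>" "sets \<mu> = sets borel" "compact (msupport \<mu>)" "c > 0"
    "\<And>\<theta>. mstd (circ_radon \<mu> \<theta>) \<ge> c" by (auto simp: Pplus_circ_def)
  have "bounded (msupport \<mu>)" using *(3) by (rule compact_imp_bounded)
  then obtain R where "\<forall>x\<in>msupport \<mu>. norm x \<le> R" unfolding bounded_iff by blast
  then have "msupport \<mu> \<subseteq> cball 0 R" by auto
  with * that show ?thesis by blast
qed

lemma Nphi_bounded:
  fixes \<mu> :: "'a::euclidean_space measure"
  assumes rho: "real_distribution \<rho>" and atomless: "\<And>x. measure \<rho> {x} = 0"
    and mu: "\<mu> \<in> Pplus_circ" and t: "cdf \<rho> t < 1"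
  shows "bounded (range (Nphi \<rho> \<mu> t))"
proof -
  obtain R c where P0: "prob_space \<mu>" "sets \<mu> = sets borel" "c > 0" "msupport \<mu> \<subseteq> cball 0 R"
    "\<forall>\<theta>. mstd (circ_radon \<mu> \<theta>) \<ge> c"
  proof (rule Pplus_facts[OF mu])
    fix R c assume "prob_space \<mu>" "sets \<mu> = sets borel" "c > 0" "msupport \<mu> \<subseteq> cball 0 R"
    "\<And>\<theta>. mstd (circ_radon \<mu> \<theta>) \<ge> c"
    then show thesis using that by blast
  qed
  note P = P0(1-4) P0(5)[rule_format]
  have "\<bar>Nphi \<rho> \<mu> t \<theta>\<bar> \<le> 2 * R / c" for \<theta>
  proof -
    let ?N = "circ_radon \<mu> \<theta>"
    have N: "real_distribution ?N" by (rule circ_radon_dist[OF P(1,2)])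
    have ab: "AE r in ?N. norm \<theta> - R \<le> r \<and> r \<le> norm \<theta> + R" by (rule circ_radon_conc[OF P(2,4)])
    have G: "norm \<theta> - R \<le> cdt \<rho> ?N t \<and> cdt \<rho> ?N t \<le> norm \<theta> + R"
      by (rule cdt_range[OF rho N ab t])
    have mm: "fmean \<rho> (cdt \<rho> ?N) = (\<integral>x. x \<partial>?N)" "fstd \<rho> (cdt \<rho> ?N) = mstd ?N"
      using cdt_moments[OF rho atomless N ab] by auto
    have M: "norm \<theta> - R \<le> (\<integral>x. x \<partial>?N) \<and> (\<integral>x. x \<partial>?N) \<le> norm \<theta> + R"
      by (rule mean_bounds[OF N ab])
    have num: "\<bar>cdt \<rho> ?N t - fmean \<rho> (cdt \<rho> ?N)\<bar> \<le> 2 * R"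
      using G M unfolding mm(1) by (simp add: abs_le_iff)
    have den: "fstd \<rho> (cdt \<rho> ?N) \<ge> c" using mm P(5)[of \<theta>] by simp
    have "\<bar>Nphi \<rho> \<mu> t \<theta>\<bar> = \<bar>cdt \<rho> ?N t - fmean \<rho> (cdt \<rho> ?N)\<bar> / fstd \<rho> (cdt \<rho> ?N)"
      unfolding Nphi_def abs_divide using den P(3) by simp
    also have "\<dots> \<le> 2 * R / c"
      by (rule frac_le) (use num den P(3) in simp_all)
    finally show ?thesis .
  qed
  then show ?thesis unfolding bounded_iff by auto
qed

locale simil =
  fixes s :: real and Q :: "'a::euclidean_space \<Rightarrow> 'a" and y :: 'a
  assumes s: "s > 0" and Q: "orthogonal_transformation Q"
begin

definition T :: "'a \<Rightarrow> 'a" where "T x = s *\<^sub>R Q x + y"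
definition Tinv :: "'a \<Rightarrow> 'a" where "Tinv z = inv Q ((1/s) *\<^sub>R (z - y))"

lemma Q_inv: "Q (inv Q v) = v"
  using orthogonal_transformation_surj[OF Q] by (simp add: surj_f_inv_f)

lemma Qlin: "linear Q" using Q by (rule orthogonal_transformation_linear)

lemma T_norm: "norm (T x - z) = s * norm (x - Tinv z)"
proof -
  have "T x - z = s *\<^sub>R (Q x - Q (Tinv z))"
    using s by (simp add: T_def Tinv_def Q_inv algebra_simps)
  also have "\<dots> = s *\<^sub>R Q (x - Tinv z)" by (simp add: linear_diff[OF Qlin])
  finally show ?thesis using s orthogonal_transformation_norm[OF Q] by simp
qed

lemma T_Tinv: "T (Tinv z) = z"
  using s by (simp add: T_def Tinv_def Q_inv)

lemma Tinv_T: "Tinv (T x) = x"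
  using s orthogonal_transformation_inj[OF Q] by (simp add: T_def Tinv_def)

lemma bij_Tinv: "bij Tinv"
  by (rule bij_betw_byWitness[where f'=T]) (auto simp: T_Tinv Tinv_T intro: image_eqI[where x="T _"])

lemma T_cont: "continuous_on UNIV T"
proof -
  have "bounded_linear Q" using Qlin linear_conv_bounded_linear by blast
  then have "continuous_on UNIV Q" by (rule linear_continuous_on)
  then show ?thesis unfolding T_def by (intro continuous_intros)
qed

lemma T_meas: "T \<in> borel_measurable borel"
  by (rule borel_measurable_continuous_onI[OF T_cont])

lemma T_meas': "sets \<mu> = sets borel \<Longrightarrow> T \<in> measurable \<mu> borel"
  by (subst measurable_cong_sets[of \<mu> borel borel borel]) (auto intro: T_meas)

lemma radon_scale:
  assumes sets: "sets \<mu> = sets borel"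
  shows "circ_radon (distr \<mu> borel T) \<theta> = distr (circ_radon \<mu> (Tinv \<theta>)) borel (\<lambda>r. s * r)"
proof -
  have m1: "(\<lambda>x. norm (x - \<theta>)) \<in> measurable borel borel" by simp
  have m2: "(\<lambda>x. norm (x - Tinv \<theta>)) \<in> measurable \<mu> borel"
    by (subst measurable_cong_sets[OF sets refl]) simp
  have "circ_radon (distr \<mu> borel T) \<theta> = distr \<mu> borel (\<lambda>x. norm (T x - \<theta>))"
    unfolding circ_radon_def using distr_distr[OF m1 T_meas'[OF sets]] by (simp add: comp_def)
  also have "\<dots> = distr \<mu> borel (\<lambda>x. s * norm (x - Tinv \<theta>))" by (simp add: T_norm)
  also have "\<dots> = distr (circ_radon \<mu> (Tinv \<theta>)) borel (\<lambda>r. s * r)"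
    unfolding circ_radon_def using distr_distr[OF _ m2, of "\<lambda>r. s * r" borel] by (simp add: comp_def)
  finally show ?thesis .
qed

lemma msupport_T:
  assumes sets: "sets \<mu> = sets borel"
  shows "msupport (distr \<mu> borel T) = T ` msupport \<mu>"
proof -
  have ball: "emeasure (distr \<mu> borel T) (ball z e) = emeasure \<mu> (ball (Tinv z) (e / s))" for z e
  proof -
    have "T -` ball z e \<inter> space \<mu> = ball (Tinv z) (e / s)"
      using sets_eq_imp_space_eq[OF sets] s
      by (auto simp: dist_norm T_norm[symmetric] norm_minus_commute field_simps)
    then show ?thesis by (simp add: emeasure_distr[OF T_meas'[OF sets]])
  qed
  have iff: "z \<in> msupport (distr \<mu> borel T) \<longleftrightarrow> Tinv z \<in> msupport \<mu>" for z
  proof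
    assume "z \<in> msupport (distr \<mu> borel T)"
    then show "Tinv z \<in> msupport \<mu>" unfolding msupport_def
    proof (intro CollectI allI impI)
      fix e :: real assume e: "e > 0" and "z \<in> {x. \<forall>e>0. 0 < emeasure (distr \<mu> borel T) (ball x e)}"
      then have "0 < emeasure (distr \<mu> borel T) (ball z (e * s))" using s by simp
      then show "0 < emeasure \<mu> (ball (Tinv z) e)" using s by (simp add: ball)
    qed
  next
    assume "Tinv z \<in> msupport \<mu>"
    then show "z \<in> msupport (distr \<mu> borel T)" unfolding msupport_def
      using s by (auto simp: ball)
  qed
  show ?thesis
  proof safe
    fix z assume "z \<in> msupport (distr \<mu> borel T)"
    then show "z \<in> T ` msupport \<mu>" using iff T_Tinv by (metis image_eqI)
  next
    fix x assume "x \<in> msupport \<mu>"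
    then show "T x \<in> msupport (distr \<mu> borel T)" using iff Tinv_T by simp
  qed
qed

lemma mstd_scale:
  assumes sets: "sets N = sets borel"
  shows "mstd (distr N borel (\<lambda>r. s * r)) = s * mstd N"
    "(\<integral>x. x \<partial>distr N borel (\<lambda>r. s * r)) = s * (\<integral>x. x \<partial>N)"
proof -
  have m: "(\<lambda>r. s * r) \<in> measurable N borel" by (subst measurable_cong_sets[OF sets refl]) simp
  show mean: "(\<integral>x. x \<partial>distr N borel (\<lambda>r. s * r)) = s * (\<integral>x. x \<partial>N)"
    using integral_distr[OF m, of "\<lambda>x. x"] by simp
  have "(\<integral>x. (x - s * (\<integral>x. x \<partial>N))\<^sup>2 \<partial>distr N borel (\<lambda>r. s * r))
      = (\<integral>x. (s * x - s * (\<integral>x. x \<partial>N))\<^sup>2 \<partial>N)"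
    using integral_distr[OF m, of "\<lambda>x. (x - s * (\<integral>x. x \<partial>N))\<^sup>2"] by simp
  also have "\<dots> = (\<integral>x. s\<^sup>2 * (x - (\<integral>x. x \<partial>N))\<^sup>2 \<partial>N)"
    by (simp add: power2_eq_square algebra_simps)
  also have "\<dots> = s\<^sup>2 * (\<integral>x. (x - (\<integral>x. x \<partial>N))\<^sup>2 \<partial>N)" by simp
  finally show "mstd (distr N borel (\<lambda>r. s * r)) = s * mstd N"
    unfolding mstd_def mean using s by (simp add: real_sqrt_mult)
qed

lemma orbit_Pplus:
  assumes mu: "\<mu> \<in> Pplus_circ"
  shows "distr \<mu> borel T \<in> Pplus_circ"
proof -
  obtain c where *: "prob_space \<mu>" "sets \<mu> = sets borel" "compact (msupport \<mu>)" "c > 0"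
    "\<And>\<theta>. mstd (circ_radon \<mu> \<theta>) \<ge> c" using mu by (auto simp: Pplus_circ_def)
  have "prob_space (distr \<mu> borel T)" by (rule prob_space.prob_space_distr[OF *(1) T_meas'[OF *(2)]])
  moreover have "compact (msupport (distr \<mu> borel T))"
    unfolding msupport_T[OF *(2)]
    by (rule compact_continuous_image[OF continuous_on_subset[OF T_cont] *(3)]) simp
  moreover have "mstd (circ_radon (distr \<mu> borel T) \<theta>) \<ge> s * c" for \<theta>
  proof -
    have sN: "sets (circ_radon \<mu> (Tinv \<theta>)) = sets borel" by (simp add: circ_radon_def)
    show ?thesis unfolding radon_scale[OF *(2)] mstd_scale(1)[OF sN]
      using *(5)[of "Tinv \<theta>"] s by simp
  qed
  ultimately show ?thesis unfolding Pplus_circ_def using *(4) s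
    by (auto intro!: exI[of _ "s * c"])
qed

end

lemma cdt_scale:
  assumes rho: "real_distribution \<rho>" and N: "real_distribution N"
    and ab: "AE x in N. a \<le> x \<and> x \<le> b" and t: "cdf \<rho> t < 1" and s: "s > 0"
  shows "cdt \<rho> (distr N borel (\<lambda>r. s * r)) t = s * cdt \<rho> N t"
proof -
  interpret R: real_distribution \<rho> by fact
  interpret NN: real_distribution N by fact
  let ?x = "cdf \<rho> t"
  have x: "0 \<le> ?x" "?x < 1" using t R.cdf_nonneg by auto
  have m: "(\<lambda>r. s * r) \<in> measurable N borel" by simp
  have cdfs: "cdf (distr N borel (\<lambda>r. s * r)) u = cdf N (u / s)" for u
  proof -
    have "(\<lambda>r. s * r) -` {..u} \<inter> space N = {..u/s}" using s by (auto simp: field_simps)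
    then show ?thesis unfolding cdf_def by (simp add: measure_distr[OF m])
  qed
  define S where "S = {w. cdf N w > ?x}"
  have bS: "b \<in> S" using cdf_above[OF N ab, of b] x by (simp add: S_def)
  have aS: "a \<le> w" if "w \<in> S" for w
    using cdf_below[OF N ab, of w] that x by (force simp: S_def)
  have bdd: "bdd_below S" using aS by (auto simp: bdd_below_def)
  have img: "{v. cdf N (v / s) > ?x} = (\<lambda>w. s * w) ` S"
  proof safe
    fix v assume "cdf N (v / s) > ?x"
    then have "v / s \<in> S" by (simp add: S_def)
    moreover have "v = s * (v / s)" using s by simp
    ultimately show "v \<in> (\<lambda>w. s * w) ` S" by blast
  next
    fix w assume "w \<in> S" then show "cdf N (s * w / s) > ?x" using s by (simp add: S_def)
  qed
  have "Inf ((\<lambda>w. s * w) ` S) = s * Inf S"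
  proof (rule cInf_eq_non_empty)
    show "(\<lambda>w. s * w) ` S \<noteq> {}" using bS by auto
  next
    fix v assume "v \<in> (\<lambda>w. s * w) ` S"
    then obtain w where "w \<in> S" "v = s * w" by auto
    then show "s * Inf S \<le> v" using cInf_lower[OF \<open>w \<in> S\<close> bdd] s by simp
  next
    fix l assume l: "\<And>v. v \<in> (\<lambda>w. s * w) ` S \<Longrightarrow> l \<le> v"
    have "l / s \<le> Inf S"
    proof (rule cInf_greatest)
      show "S \<noteq> {}" using bS by auto
    next
      fix w assume "w \<in> S"
      then have "l \<le> s * w" using l by auto
      then show "l / s \<le> w" using s by (simp add: field_simps)
    qed
    then show "l \<le> s * Inf S" using s by (simp add: field_simps)
  qed
  then show ?thesis unfolding cdt_def gen_inv_def cdfs img by (simp add: S_def)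
qed

context simil
begin

lemma Nphi_T:
  assumes rho: "real_distribution \<rho>" and atomless: "\<And>x. measure \<rho> {x} = 0"
    and mu: "\<mu> \<in> Pplus_circ" and t: "cdf \<rho> t < 1"
  shows "Nphi \<rho> (distr \<mu> borel T) t \<theta> = Nphi \<rho> \<mu> t (Tinv \<theta>)"
proof -
  have nu: "distr \<mu> borel T \<in> Pplus_circ" by (rule orbit_Pplus[OF mu])
  obtain R c where P0: "prob_space \<mu>" "sets \<mu> = sets borel" "c > 0" "msupport \<mu> \<subseteq> cball 0 R"
    "\<forall>\<theta>. mstd (circ_radon \<mu> \<theta>) \<ge> c"
  proof (rule Pplus_facts[OF mu])
    fix R c assume "prob_space \<mu>" "sets \<mu> = sets borel" "c > 0" "msupport \<mu> \<subseteq> cball 0 R"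
    "\<And>\<theta>. mstd (circ_radon \<mu> \<theta>) \<ge> c"
    then show thesis using that by blast
  qed
  obtain R' c' where P1: "prob_space (distr \<mu> borel T)" "sets (distr \<mu> borel T) = sets borel" "c' > 0"
    "msupport (distr \<mu> borel T) \<subseteq> cball 0 R'"
    "\<forall>\<theta>. mstd (circ_radon (distr \<mu> borel T) \<theta>) \<ge> c'"
  proof (rule Pplus_facts[OF nu])
    fix R c assume "prob_space (distr \<mu> borel T)" "sets (distr \<mu> borel T) = sets borel" "c > 0"
      "msupport (distr \<mu> borel T) \<subseteq> cball 0 R"
    "\<And>\<theta>. mstd (circ_radon (distr \<mu> borel T) \<theta>) \<ge> c"
    then show thesis using that by blast
  qed
  let ?N = "circ_radon \<mu> (Tinv \<theta>)"
  let ?N' = "circ_radon (distr \<mu> borel T) \<theta>"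
  have N: "real_distribution ?N" by (rule circ_radon_dist[OF P0(1,2)])
  have ab: "AE r in ?N. norm (Tinv \<theta>) - R \<le> r \<and> r \<le> norm (Tinv \<theta>) + R"
    by (rule circ_radon_conc[OF P0(2,4)])
  have N': "real_distribution ?N'" by (rule circ_radon_dist[OF P1(1,2)])
  have ab': "AE r in ?N'. norm \<theta> - R' \<le> r \<and> r \<le> norm \<theta> + R'"
    by (rule circ_radon_conc[OF P1(2,4)])
  have eqN: "?N' = distr ?N borel (\<lambda>r. s * r)" by (rule radon_scale[OF P0(2)])
  have sN: "sets ?N = sets borel" by (simp add: circ_radon_def)
  have c1: "cdt \<rho> ?N' t = s * cdt \<rho> ?N t"
    unfolding eqN by (rule cdt_scale[OF rho N ab t s])
  have c2: "fmean \<rho> (cdt \<rho> ?N') = s * fmean \<rho> (cdt \<rho> ?N)"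
    unfolding cdt_moments(1)[OF rho atomless N' ab'] cdt_moments(1)[OF rho atomless N ab]
    unfolding eqN by (rule mstd_scale(2)[OF sN])
  have c3: "fstd \<rho> (cdt \<rho> ?N') = s * fstd \<rho> (cdt \<rho> ?N)"
    unfolding cdt_moments(2)[OF rho atomless N' ab'] cdt_moments(2)[OF rho atomless N ab]
    unfolding eqN by (rule mstd_scale(1)[OF sN])
  show ?thesis unfolding Nphi_def c1 c2 c3 using s
    by (simp add: right_diff_distrib[symmetric])
qed

lemma Nh_T:
  assumes rho: "real_distribution \<rho>" and atomless: "\<And>x. measure \<rho> {x} = 0"
    and mu: "\<mu> \<in> Pplus_circ"
    and h_invariant: "\<And>g \<psi>. bounded (range g) \<Longrightarrow> bij \<psi> \<Longrightarrow> h (g \<circ> \<psi>) = h g"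
    and L: "Nh \<rho> h \<mu> \<in> Linf \<rho>"
  shows "Nh \<rho> h (distr \<mu> borel T) \<in> Linf \<rho> \<and> (AE t in \<rho>. Nh \<rho> h (distr \<mu> borel T) t = Nh \<rho> h \<mu> t)"
proof -
  interpret R: real_distribution \<rho> by fact
  let ?nu = "distr \<mu> borel T"
  have eq1: "Nh \<rho> h ?nu t = Nh \<rho> h \<mu> t" if t: "cdf \<rho> t < 1" for t
  proof -
    have e: "Nphi \<rho> ?nu t = Nphi \<rho> \<mu> t \<circ> Tinv"
      using Nphi_T[OF rho atomless mu t] by (simp add: fun_eq_iff)
    have "Nh \<rho> h ?nu t = h (Nphi \<rho> ?nu t)" unfolding Nh_def by simp
    also have "\<dots> = h (Nphi \<rho> \<mu> t \<circ> Tinv)" by (simp only: e)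
    also have "\<dots> = h (Nphi \<rho> \<mu> t)"
      by (rule h_invariant[OF Nphi_bounded[OF rho atomless mu t] bij_Tinv])
    also have "\<dots> = Nh \<rho> h \<mu> t" unfolding Nh_def by simp
    finally show ?thesis .
  qed
  define \<kappa> where "\<kappa> = h (\<lambda>\<theta>. (gen_inv (cdf (circ_radon ?nu \<theta>)) 1 - fmean \<rho> (cdt \<rho> (circ_radon ?nu \<theta>)))
       / fstd \<rho> (cdt \<rho> (circ_radon ?nu \<theta>)))"
  have eq: "Nh \<rho> h ?nu = (\<lambda>t. if cdf \<rho> t < 1 then Nh \<rho> h \<mu> t else \<kappa>)"
  proof
    fix t
    show "Nh \<rho> h ?nu t = (if cdf \<rho> t < 1 then Nh \<rho> h \<mu> t else \<kappa>)"
    proof (cases "cdf \<rho> t < 1")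
      case True then show ?thesis using eq1 by simp
    next
      case False
      then have "cdf \<rho> t = 1" using R.cdf_bounded_prob[of t] by simp
      then show ?thesis using False by (simp add: Nh_def Nphi_def cdt_def \<kappa>_def)
    qed
  qed
  have Lm: "Nh \<rho> h \<mu> \<in> borel_measurable \<rho>" using L by (simp add: Linf_def)
  obtain B where B: "AE t in \<rho>. \<bar>Nh \<rho> h \<mu> t\<bar> \<le> B" using L by (auto simp: Linf_def)
  have Fm: "cdf \<rho> \<in> borel_measurable \<rho>" using cdf_meas[OF rho] by simp
  have meas: "Nh \<rho> h ?nu \<in> borel_measurable \<rho>" unfolding eq using Lm Fm by measurable
  have AE1: "AE t in \<rho>. cdf \<rho> t < 1" by (rule AE_cdf_less1[OF rho atomless])
  have AEeq: "AE t in \<rho>. Nh \<rho> h ?nu t = Nh \<rho> h \<mu> t" using AE1 by eventually_elim (simp add: eq)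
  have "AE t in \<rho>. \<bar>Nh \<rho> h ?nu t\<bar> \<le> B" using AEeq B by eventually_elim simp
  then show ?thesis using meas AEeq by (auto simp: Linf_def)
qed

end

theorem theorem18:
  fixes \<rho> :: "real measure"
    and h :: "('a::euclidean_space \<Rightarrow> real) \<Rightarrow> real"
    and \<mu>0 \<nu>0 :: "'a measure"
  assumes rho_prob: "prob_space \<rho>"
    and rho_sets: "sets \<rho> = sets borel"
    and rho_no_atoms: "\<And>x. emeasure \<rho> {x} = 0"
    and h_bounded: "\<And>B. \<exists>M. \<forall>g. (\<forall>\<theta>. \<bar>g \<theta>\<bar> \<le> B) \<longrightarrow> \<bar>h g\<bar> \<le> M"
    and h_invariant: "\<And>g \<psi>. bounded (range g) \<Longrightarrow> bij \<psi> \<Longrightarrow> h (g \<circ> \<psi>) = h g"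
    and mu0: "\<mu>0 \<in> Pplus_circ"
    and nu0: "\<nu>0 \<in> Pplus_circ"
    and mu0_Linf: "Nh \<rho> h \<mu>0 \<in> Linf \<rho>"
    and nu0_Linf: "Nh \<rho> h \<nu>0 \<in> Linf \<rho>"
    and distinct: "\<not> (AE t in \<rho>. Nh \<rho> h \<mu>0 t = Nh \<rho> h \<nu>0 t)"
  shows "sim_orbit \<mu>0 \<subseteq> Pplus_circ \<and> sim_orbit \<nu>0 \<subseteq> Pplus_circ \<and>
         lin_separable_Linf \<rho> (Nh \<rho> h ` sim_orbit \<mu>0) (Nh \<rho> h ` sim_orbit \<nu>0)"
proof -
  have rho: "real_distribution \<rho>"
    using rho_prob rho_sets by (simp add: real_distribution_def real_distribution_axioms_def)
  have atomless: "\<And>x. measure \<rho> {x} = 0" using rho_no_atoms by (simp add: measure_def)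
  have orbit: "\<exists>s Q y. simil s Q \<and> \<nu> = distr \<mu> borel (simil.T s Q y)" if nuin: "\<nu> \<in> sim_orbit \<mu>" for \<nu> \<mu> :: "'a measure"
  proof -
    obtain s Q y where o: "\<nu> = distr \<mu> borel (\<lambda>x. s *\<^sub>R Q x + y)" "s > 0" "orthogonal_transformation Q"
      using nuin by (auto simp: sim_orbit_def)
    have si: "simil s Q" using o(2,3) by (rule simil.intro)
    have "simil.T s Q y = (\<lambda>x. s *\<^sub>R Q x + y)" using simil.T_def[OF si] by (simp add: fun_eq_iff)
    then show ?thesis using si o(1) by metis
  qed
  have sub: "sim_orbit \<mu> \<subseteq> Pplus_circ" if muP: "\<mu> \<in> Pplus_circ" for \<mu> :: "'a measure"
  proof
    fix \<nu> assume "\<nu> \<in> sim_orbit \<mu>"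
    then obtain s Q y where "simil s Q" "\<nu> = distr \<mu> borel (simil.T s Q y)" using orbit by blast
    then show "\<nu> \<in> Pplus_circ" using simil.orbit_Pplus muP by blast
  qed
  have NhO: "Nh \<rho> h \<nu> \<in> Linf \<rho> \<and> (AE t in \<rho>. Nh \<rho> h \<nu> t = Nh \<rho> h \<mu> t)"
    if hyp: "\<mu> \<in> Pplus_circ" "Nh \<rho> h \<mu> \<in> Linf \<rho>" "\<nu> \<in> sim_orbit \<mu>" for \<mu> \<nu> :: "'a measure"
  proof -
    obtain s Q y where "simil s Q" "\<nu> = distr \<mu> borel (simil.T s Q y)" using orbit hyp(3) by blast
    then show ?thesis using simil.Nh_T[OF _ rho atomless hyp(1) h_invariant hyp(2)] by blast
  qed
  have sep: "lin_separable_Linf \<rho> (Nh \<rho> h ` sim_orbit \<mu>0) (Nh \<rho> h ` sim_orbit \<nu>0)"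
    by (rule separation[OF rho_prob mu0_Linf nu0_Linf distinct])
      (use NhO[OF mu0 mu0_Linf] NhO[OF nu0 nu0_Linf] in auto)
  show ?thesis using sub[OF mu0] sub[OF nu0] sep by blast
qed

end
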